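(* Let $d\ge 10$. For $a\ge0$ let $u(a,\cdot)$ be the solution of $$y^{2}(1-y^{2})u''+\big((d-3)y-2y^{3}\big)u'+(d-2)u(1-u^{2})=0$$ with $u(a,y)=1-ay^{2}+O(y^{4})$ as $y\to0$, and let $c(a)=\lim_{y\to1^-}u(a,y)$. Then the function $a\mapsto c(a)$ is monotone decreasing on $[0,\infty)$, with $c(0)=1$ and $\lim_{a\to\infty}c(a)=0$.
   Context: For each $a\ge0$ there is a unique solution $u(a,y)$ of the equation, analytic in $(a,y)$ near $y=0$, with expansion $u(a,y)=1-ay^2+O(y^4)$ near $y=0$; it extends to a solution on $[0,1)$ and the limit $\lim_{y\to1^-}u(a,y)$ exists and is finite. *)

theory Defs
  imports "HOL-Analysis.Analysis"
begin

definition profile_solution ::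
  "nat \<Rightarrow> real \<Rightarrow> (real \<Rightarrow> real) \<Rightarrow> (real \<Rightarrow> real) \<Rightarrow> (real \<Rightarrow> real) \<Rightarrow> bool" where
  "profile_solution d a v v1 v2 \<longleftrightarrow>
     (\<forall>y\<in>{0<..<1}.
        (v has_real_derivative v1 y) (at y) \<and>
        (v1 has_real_derivative v2 y) (at y) \<and>
        y^2 * (1 - y^2) * v2 y + ((real d - 3) * y - 2 * y^3) * v1 y
          + (real d - 2) * v y * (1 - (v y)^2) = 0) \<and>
     (\<lambda>y. v y - (1 - a * y^2)) \<in> O[at_right 0](\<lambda>y. y^4)"

end

theory Submission
  imports Defs
begin


lemma cmp:
  fixes d :: nat and U Ud Udd V Vd Vdd :: "real \<Rightarrow> real" and \<delta> :: real
  assumes d: "d \<ge> 10"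
  and dU: "\<And>y. 0<y \<Longrightarrow> y<1 \<Longrightarrow> (U has_real_derivative Ud y) (at y)"
  and dU1: "\<And>y. 0<y \<Longrightarrow> y<1 \<Longrightarrow> (Ud has_real_derivative Udd y) (at y)"
  and dV: "\<And>y. 0<y \<Longrightarrow> y<1 \<Longrightarrow> (V has_real_derivative Vd y) (at y)"
  and dV1: "\<And>y. 0<y \<Longrightarrow> y<1 \<Longrightarrow> (Vd has_real_derivative Vdd y) (at y)"
  and res: "\<And>y. 0<y \<Longrightarrow> y<1 \<Longrightarrow>
     y^2*(1-y^2)*Vdd y + ((real d-3)*y - 2*y^3)*Vd y + (real d-2)*V y*(1-(V y)^2)
   \<le> y^2*(1-y^2)*Udd y + ((real d-3)*y - 2*y^3)*Ud y + (real d-2)*U y*(1-(U y)^2)"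
  and dpos: "\<delta> > 0"
  and pos: "\<And>y. 0<y \<Longrightarrow> y<\<delta> \<Longrightarrow> V y < U y"
  and lim: "((\<lambda>y. y^3*(U y - V y)) \<longlongrightarrow> 0) (at_right 0)"
  and y2: "0 < y2" "y2 < 1"
  shows "V y2 < U y2"
proof (rule ccontr)
  assume "\<not> V y2 < U y2"
  hence wy2: "U y2 - V y2 \<le> 0" by simp
  define z where "z = (\<lambda>y::real. y^3*(U y - V y))"
  define z1 where "z1 = (\<lambda>y::real. 3*y^2*(U y - V y) + y^3*(Ud y - Vd y))"
  define z2 where "z2 = (\<lambda>y::real. 6*y*(U y - V y) + 6*y^2*(Ud y - Vd y) + y^3*(Udd y - Vdd y))"
  have dz: "(z has_real_derivative z1 y) (at y)" if "0<y" "y<1" for y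
    unfolding z_def z1_def
    by (rule derivative_eq_intros dU[OF that] dV[OF that] refl | simp)+
  have dz1: "(z1 has_real_derivative z2 y) (at y)" if "0<y" "y<1" for y
    unfolding z2_def z1_def
    by (rule derivative_eq_intros dU[OF that] dV[OF that] dU1[OF that] dV1[OF that] refl | simp)+ 

  define e where "e = min \<delta> y2 / 2"
  have e: "0 < e" "e < \<delta>" "e < y2" using dpos y2 by (auto simp: e_def)
  have ze: "z e > 0" unfolding z_def using pos[of e] e by simp
  have "\<forall>\<^sub>F y in at_right 0. z y < z e"
    using order_tendstoD(2)[OF lim[folded z_def] ze] .
  then obtain b where b: "b > 0" "\<And>y. 0<y \<Longrightarrow> y<b \<Longrightarrow> z y < z e"
    unfolding eventually_at_right_field by auto
  define \<epsilon> where "\<epsilon> = min b e / 2"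
  have eps: "0 < \<epsilon>" "\<epsilon> < e" "z \<epsilon> < z e" using b e by (auto simp: \<epsilon>_def)
  have cont: "continuous_on {\<epsilon>..y2} z"
  proof (intro continuous_at_imp_continuous_on ballI)
    fix x assume "x \<in> {\<epsilon>..y2}"
    hence "0 < x" "x < 1" using eps e y2 by auto
    thus "isCont z x" using DERIV_isCont[OF dz] by blast
  qed
  obtain ys where ys: "ys \<in> {\<epsilon>..y2}" "\<And>x. x \<in> {\<epsilon>..y2} \<Longrightarrow> z x \<le> z ys"
    using continuous_attains_sup[OF compact_Icc _ cont] eps e by fastforce
  have zys: "z ys \<ge> z e" using ys e eps by auto
  have "ys \<noteq> \<epsilon>" using zys eps by auto
  moreover have "ys \<noteq> y2"
  proof
    assume "ys = y2"
    have "z y2 \<le> 0" unfolding z_def using wy2 y2 by (simp add: mult_nonneg_nonpos)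
    thus False using zys ze \<open>ys = y2\<close> by simp
  qed
  ultimately have ys2: "\<epsilon> < ys" "ys < y2" using ys by auto
  have ys0: "0 < ys" "ys < 1" using ys2 eps y2 by auto
  have "z1 ys = 0"
    by (rule DERIV_local_max[OF dz[OF ys0], of "min (ys - \<epsilon>) (y2 - ys)"])
       (use ys2 ys in \<open>auto simp: abs_less_iff\<close>)
  have "z2 ys > 0"
  proof -
    define y where "y = ys"
    define W where "W = U y - V y"
    define W1 where "W1 = Ud y - Vd y"
    define W2 where "W2 = Udd y - Vdd y"
    have y: "0 < y" "y < 1" using ys0 by (auto simp: y_def)
    have "y^3 * W > 0" using zys ze unfolding z_def W_def y_def by simp
    hence Wp: "W > 0" using y by (simp add: zero_less_mult_iff)
    have "3*y^2*W + y^3*W1 = 0" using \<open>z1 ys = 0\<close> unfolding z1_def W_def W1_def y_def by simp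
    hence "y^2 * (3*W + y*W1) = 0" by (simp add: algebra_simps power3_eq_cube power2_eq_square)
    hence yW1: "y*W1 = -3*W" using y by simp
    have r: "y^2*(1-y^2)*W2 \<ge> - ((real d-3)*y - 2*y^3)*W1 - (real d-2)*(U y*(1-(U y)^2) - V y*(1-(V y)^2))"
      using res[OF y] unfolding W2_def W1_def by (simp add: algebra_simps)
    have f: "U y*(1-(U y)^2) - V y*(1-(V y)^2) = W * (1 - ((U y)^2 + U y * V y + (V y)^2))"
      unfolding W_def by (simp add: algebra_simps power2_eq_square power3_eq_cube)
    have sq: "(U y)^2 + U y * V y + (V y)^2 \<ge> 0"
    proof -
      have "(U y)^2 + U y * V y + (V y)^2 = (U y + V y/2)^2 + 3/4*(V y)^2"
        by (simp add: algebra_simps power2_eq_square)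
      moreover have "0 \<le> (U y + V y/2)^2 + 3/4*(V y)^2" by simp
      ultimately show ?thesis by linarith
    qed
    have f2: "U y*(1-(U y)^2) - V y*(1-(V y)^2) \<le> W" unfolding f using Wp sq
      by (simp add: mult_left_le)
    have dd: "real d - 2 \<ge> 0" using d by simp
    have q: "- ((real d-3)*y - 2*y^3)*W1 = 3*W*((real d-3) - 2*y^2)"
    proof -
      have "- ((real d-3)*y - 2*y^3)*W1 = -(real d-3)*(y*W1) + 2*y^2*(y*W1)"
        by (simp add: algebra_simps power2_eq_square power3_eq_cube)
      also have "\<dots> = 3*W*((real d-3) - 2*y^2)" unfolding yW1 by (simp add: algebra_simps)
      finally show ?thesis .
    qed
    have r2: "y^2*(1-y^2)*W2 \<ge> 3*W*((real d-3) - 2*y^2) - (real d-2)*W"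
      using r q f2 mult_left_mono[OF f2 dd] by linarith
    have "(1-y^2) * z2 y = 6*y*W*(1-y^2) + 6*y*(1-y^2)*(y*W1) + y*(y^2*(1-y^2)*W2)"
      unfolding z2_def W_def W1_def W2_def by (simp add: algebra_simps power2_eq_square power3_eq_cube)
    also have "\<dots> \<ge> 6*y*W*(1-y^2) + 6*y*(1-y^2)*(-3*W) + y*(3*W*((real d-3) - 2*y^2) - (real d-2)*W)"
      using mult_left_mono[OF r2, of y] y yW1 by simp
    finally have "(1-y^2) * z2 y \<ge> y*W*(2*real d - 19 + 6*y^2)"
      by (simp add: algebra_simps)
    moreover have "y*W*(2*real d - 19 + 6*y^2) > 0" 
    proof (intro mult_pos_pos)
      have "real d \<ge> 10" using d by simp
      moreover have "y^2 \<ge> 0" by simp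
      ultimately show "2*real d - 19 + 6*y^2 > 0" by linarith
    qed (use y Wp in auto)
    ultimately have "(1-y^2) * z2 y > 0" by linarith
    moreover have "1 - y^2 > 0" using y by (simp add: power_less_one_iff abs_less_iff) 
    ultimately show ?thesis unfolding y_def by (simp add: zero_less_mult_iff)
  qed
  from DERIV_pos_inc_right[OF dz1[OF ys0] this] obtain d' where
    d': "d' > 0" "\<And>h. h > 0 \<Longrightarrow> h < d' \<Longrightarrow> z1 ys < z1 (ys + h)" by auto
  define mm where "mm = min d' (y2 - ys)"
  have m: "mm \<le> y2 - ys" "mm \<le> d'" "mm > 0"
    using d'(1) ys2 unfolding mm_def by auto
  define t where "t = ys + mm / 2"
  have t1: "ys < t" using m(3) unfolding t_def by linarith
  have t2: "t < y2" using m(1,3) unfolding t_def by linarith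
  have t3: "t < ys + d'" using m(2,3) unfolding t_def by linarith
  note t = t1 t2 t3
  obtain \<xi> where xi: "ys < \<xi>" "\<xi> < t" "z t - z ys = (t - ys) * z1 \<xi>"
    using MVT2[OF t(1), of z z1] dz ys0 t y2 by (smt (verit))
  have "z1 \<xi> > 0" using d'(2)[of "\<xi> - ys"] xi t \<open>z1 ys = 0\<close> by simp
  hence "(t - ys) * z1 \<xi> > 0" using xi by (intro mult_pos_pos) auto
  hence "z t > z ys" using xi(3) by linarith
  moreover have "z t \<le> z ys" using ys t ys2 by auto
  ultimately show False by simp
qed



lemma lim_le:
  fixes f g :: "real \<Rightarrow> real"
  assumes "(f \<longlongrightarrow> A) (at_left 1)" "(g \<longlongrightarrow> B) (at_left 1)"
    "\<And>y. 0<y \<Longrightarrow> y<1 \<Longrightarrow> f y \<le> g y"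
  shows "A \<le> B"
proof (rule tendsto_le[OF trivial_limit_at_left_real assms(2,1)])
  show "\<forall>\<^sub>F x in at_left 1. f x \<le> g x"
    unfolding eventually_at_left_field using assms(3) by (intro exI[of _ 0]) auto
qed

lemma lim3:
  fixes U V :: "real \<Rightarrow> real"
  assumes "(U \<longlongrightarrow> A) (at_right 0)" "(V \<longlongrightarrow> B) (at_right 0)"
  shows "((\<lambda>y. y^3*(U y - V y)) \<longlongrightarrow> 0) (at_right 0)"
proof -
  have "((\<lambda>y. y^3*(U y - V y)) \<longlongrightarrow> 0^3*(A - B)) (at_right 0)"
    by (intro tendsto_intros assms tendsto_ident_at)
  thus ?thesis by simp
qed

lemma pos_near0:
  fixes F :: "real \<Rightarrow> real"
  assumes "\<alpha> > 0" "K \<ge> 0" "\<delta>0 > 0" "\<And>y. 0<y \<Longrightarrow> y<\<delta>0 \<Longrightarrow> F y \<ge> \<alpha>*y^2 - K*y^4"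
  obtains \<delta> where "\<delta> > 0" "\<And>y. 0<y \<Longrightarrow> y<\<delta> \<Longrightarrow> F y > 0"
proof -
  define \<delta> where "\<delta> = min \<delta>0 (min 1 (\<alpha>/(K+1)))"
  have "\<delta> > 0" using assms by (simp add: \<delta>_def)
  moreover have "F y > 0" if y: "0<y" "y<\<delta>" for y
  proof -
    have y1: "y < 1" "y < \<alpha>/(K+1)" "y < \<delta>0" using y by (auto simp: \<delta>_def)
    have "y^2 \<le> y" using y y1 by (simp add: power2_eq_square mult_left_le_one_le)
    hence "(K+1)*y^2 < \<alpha>" using y1 assms(2) by (simp add: field_simps) (smt (verit) mult_left_mono)
    hence "(K+1)*y^2*y^2 < \<alpha>*y^2" using y by (intro mult_strict_right_mono) auto
    hence "K*y^4 < \<alpha>*y^2"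
      by (smt (verit) mult_nonneg_nonneg zero_le_power2 power2_eq_square power4_eq_xxxx distrib_right mult.assoc)
    thus ?thesis using assms(4)[OF y(1) y1(3)] by linarith
  qed
  ultimately show ?thesis using that by blast
qed

lemma ps_facts:
  assumes "profile_solution d a v v1 v2"
  shows "\<And>y. 0<y \<Longrightarrow> y<1 \<Longrightarrow> (v has_real_derivative v1 y) (at y)"
    "\<And>y. 0<y \<Longrightarrow> y<1 \<Longrightarrow> (v1 has_real_derivative v2 y) (at y)"
    "\<And>y. 0<y \<Longrightarrow> y<1 \<Longrightarrow> y^2 * (1 - y^2) * v2 y + ((real d - 3) * y - 2 * y^3) * v1 y
          + (real d - 2) * v y * (1 - (v y)^2) = 0"
    "(\<lambda>y. v y - (1 - a * y^2)) \<in> O[at_right 0](\<lambda>y. y^4)"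
  using assms unfolding profile_solution_def by auto

lemma ps_bound:
  assumes "profile_solution d a v v1 v2"
  obtains C \<delta> where "C \<ge> 0" "\<delta> > 0" "\<And>y. 0<y \<Longrightarrow> y<\<delta> \<Longrightarrow> \<bar>v y - (1 - a*y^2)\<bar> \<le> C*y^4"
proof -
  from ps_facts(4)[OF assms] obtain C where C: "C > 0"
    "\<forall>\<^sub>F y in at_right 0. norm (v y - (1 - a * y^2)) \<le> C * norm (y^4)"
    by (elim landau_o.bigE)
  then obtain b where b: "b > 0" "\<And>y. 0<y \<Longrightarrow> y<b \<Longrightarrow> norm (v y - (1 - a * y^2)) \<le> C * norm (y^4)"
    unfolding eventually_at_right_field by auto
  show ?thesis
    by (rule that[of C b]) (use C b in auto)
qed

lemma ps_lim:
  assumes "profile_solution d a v v1 v2"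
  shows "(v \<longlongrightarrow> 1) (at_right 0)"
proof -
  obtain C \<delta> where Cd: "C \<ge> 0" "\<delta> > 0" "\<And>y. 0<y \<Longrightarrow> y<\<delta> \<Longrightarrow> \<bar>v y - (1 - a*y^2)\<bar> \<le> C*y^4"
    using ps_bound[OF assms] by blast
  have "((\<lambda>y. v y - (1 - a*y^2)) \<longlongrightarrow> 0) (at_right 0)"
  proof (rule Lim_null_comparison)
    show "\<forall>\<^sub>F y in at_right 0. norm (v y - (1 - a*y^2)) \<le> C*y^4"
      unfolding eventually_at_right_field using Cd by (intro exI[of _ \<delta>]) auto
    have "((\<lambda>y::real. C*y^4) \<longlongrightarrow> C*0^4) (at_right 0)" by (intro tendsto_intros tendsto_ident_at)
    thus "((\<lambda>y::real. C*y^4) \<longlongrightarrow> 0) (at_right 0)" by simp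
  qed
  moreover have "((\<lambda>y::real. 1 - a*y^2) \<longlongrightarrow> 1 - a*0^2) (at_right 0)" by (intro tendsto_intros tendsto_ident_at)
  ultimately have "((\<lambda>y. (v y - (1 - a*y^2)) + (1 - a*y^2)) \<longlongrightarrow> 0 + (1 - a*0^2)) (at_right 0)"
    by (intro tendsto_add)
  thus ?thesis by simp
qed




lemma poly_res:
  fixes tt y D :: real
  shows "y^2*(1-y^2)*(tt *(2+48*y^2)) + ((D-3)*y - 2*y^3)*(tt *(2*y+16*y^3))
     + (D-2)*(1+tt*(y^2 + 4*y^4))*(1-(1+tt*(y^2 + 4*y^4))^2)
   = tt *((8*D+10)*y^4 - 80*y^6) - (D-2)*(3* tt^2*(y^2 + 4*y^4)^2 + tt^3*(y^2 + 4*y^4)^3)"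
  by algebra

lemma g_bounds:
  fixes y :: real assumes "0<y" "y<1"
  shows "0 \<le> y^2 + 4*y^4" "(y^2 + 4*y^4)^2 \<le> 25*y^4" "(y^2 + 4*y^4)^3 \<le> 125*y^4" "y^6 \<le> y^4"
proof -
  have y4: "y^4 \<le> y^2" using assms by (intro power_decreasing) auto
  have y6: "y^6 \<le> y^4" using assms by (intro power_decreasing) auto
  have g0: "0 \<le> y^2 + 4*y^4" by simp
  have g5: "y^2 + 4*y^4 \<le> 5*y^2" using y4 by simp
  have "(y^2 + 4*y^4)^2 \<le> (5*y^2)^2" using g0 g5 by (intro power_mono) auto
  also have "\<dots> = 25*y^4" by (simp add: power_mult_distrib)
  finally have a: "(y^2 + 4*y^4)^2 \<le> 25*y^4" .
  have "(y^2 + 4*y^4)^3 \<le> (5*y^2)^3" using g0 g5 by (intro power_mono) auto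
  also have "\<dots> = 125*y^6" by (simp add: power_mult_distrib flip: power_mult)
  also have "\<dots> \<le> 125*y^4" using y6 by simp
  finally show "(y^2 + 4*y^4)^3 \<le> 125*y^4" .
  show "0 \<le> y^2 + 4*y^4" "(y^2 + 4*y^4)^2 \<le> 25*y^4" "y^6 \<le> y^4" using g0 a y6 by auto
qed

lemma up_res:
  fixes y D \<epsilon> :: real
  assumes "D \<ge> 10" "0<y" "y<1" "0<\<epsilon>" "\<epsilon> \<le> 1" "(D-2)*\<epsilon> \<le> 1/100"
  shows "\<epsilon>*((8*D+10)*y^4 - 80*y^6) - (D-2)*(3*\<epsilon>^2*(y^2 + 4*y^4)^2 + \<epsilon>^3*(y^2 + 4*y^4)^3) \<ge> 0"
proof -
  note gb = g_bounds[OF assms(2,3)]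
  define G where "G = y^2 + 4*y^4"
  have y4: "y^4 \<ge> 0" by simp
  have L: "\<epsilon>*((8*D+10)*y^4 - 80*y^6) \<ge> \<epsilon>*(10*y^4)"
  proof (rule mult_left_mono)
    have "80*y^4 \<le> (8*D)*y^4" using assms(1) y4 by (intro mult_right_mono) auto
    thus "10*y^4 \<le> (8*D+10)*y^4 - 80*y^6" using gb(4) by (simp add: algebra_simps)
  qed (use assms in auto)
  have e2: "\<epsilon>^2 \<ge> 0" "\<epsilon>^3 \<ge> 0" "\<epsilon>^3 \<le> \<epsilon>^2" using assms by (auto intro: power_decreasing)
  have "3*\<epsilon>^2*G^2 + \<epsilon>^3*G^3 \<le> 3*\<epsilon>^2*(25*y^4) + \<epsilon>^2*(125*y^4)"
    using gb e2 unfolding G_def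
    by (intro add_mono mult_left_mono mult_mono) auto
  also have "\<dots> = 200*\<epsilon>^2*y^4" by simp
  finally have N: "3*\<epsilon>^2*G^2 + \<epsilon>^3*G^3 \<le> 200*\<epsilon>^2*y^4" .
  have "(D-2)*(3*\<epsilon>^2*G^2 + \<epsilon>^3*G^3) \<le> (D-2)*(200*\<epsilon>^2*y^4)"
    using N assms(1) by (intro mult_left_mono) auto
  also have "\<dots> = 200*((D-2)*\<epsilon>)*(\<epsilon>*y^4)" by (simp add: power2_eq_square)
  also have "\<dots> \<le> 200*(1/100)*(\<epsilon>*y^4)"
    using assms by (intro mult_right_mono mult_left_mono) auto
  finally have "(D-2)*(3*\<epsilon>^2*G^2 + \<epsilon>^3*G^3) \<le> 2*(\<epsilon>*y^4)" by simp
  moreover have "\<epsilon>*y^4 \<ge> 0" using assms by simp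
  ultimately show ?thesis using L unfolding G_def by linarith
qed

lemma low_res:
  fixes y D \<epsilon> :: real
  assumes "D \<ge> 10" "0<y" "y<1" "0<\<epsilon>" "\<epsilon> \<le> 1" "(D-2)*\<epsilon> \<le> 1/100"
  shows "(-\<epsilon>)*((8*D+10)*y^4 - 80*y^6) - (D-2)*(3*(-\<epsilon>)^2*(y^2 + 4*y^4)^2 + (-\<epsilon>)^3*(y^2 + 4*y^4)^3) \<le> 0"
proof -
  note gb = g_bounds[OF assms(2,3)]
  define G where "G = y^2 + 4*y^4"
  have y4: "y^4 \<ge> 0" by simp
  have L: "\<epsilon>*((8*D+10)*y^4 - 80*y^6) \<ge> \<epsilon>*(10*y^4)"
  proof (rule mult_left_mono)
    have "80*y^4 \<le> (8*D)*y^4" using assms(1) y4 by (intro mult_right_mono) auto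
    thus "10*y^4 \<le> (8*D+10)*y^4 - 80*y^6" using gb(4) by (simp add: algebra_simps)
  qed (use assms in auto)
  have e2: "\<epsilon>^2 \<le> \<epsilon>" using assms by (simp add: power2_eq_square mult_le_one)
  have "\<epsilon>^3*G^3 \<le> \<epsilon>^3*(125*y^4)" using gb assms unfolding G_def
    by (intro mult_left_mono) auto
  hence "(D-2)*(\<epsilon>^3*G^3) \<le> (D-2)*(\<epsilon>^3*(125*y^4))" by (rule mult_left_mono) (use assms(1) in auto)
  also have "\<dots> = ((D-2)*\<epsilon>)*(125*\<epsilon>^2*y^4)" by (simp add: power2_eq_square power3_eq_cube)
  also have "\<dots> \<le> (1/100)*(125*\<epsilon>^2*y^4)" using assms y4 by (intro mult_right_mono) auto
  also have "\<dots> \<le> (1/100)*(125*\<epsilon>*y^4)" using e2 y4 by (intro mult_left_mono mult_right_mono) auto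
  finally have N: "(D-2)*(\<epsilon>^3*G^3) \<le> 125/100*(\<epsilon>*y^4)" by simp
  have "(D-2)*(3*\<epsilon>^2*G^2) \<ge> 0" using assms(1) by simp
  hence "(-\<epsilon>)*((8*D+10)*y^4 - 80*y^6) - (D-2)*(3*(-\<epsilon>)^2*G^2 + (-\<epsilon>)^3*G^3)
     \<le> - (\<epsilon>*(10*y^4)) + (D-2)*(\<epsilon>^3*G^3)" using L by (simp add: algebra_simps)
  moreover have "\<epsilon>*y^4 \<ge> 0" using assms by simp
  ultimately show ?thesis using N unfolding G_def by linarith
qed



lemma sq_derivs:
  fixes a y :: real assumes "a \<ge> 0"
  defines "S \<equiv> (\<lambda>y. sqrt (1 + a*y^2))"
  shows "((\<lambda>y. 1 / S y) has_real_derivative (- a*y/(S y)^3)) (at y)"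
    "((\<lambda>y. - a*y/(S y)^3) has_real_derivative (- a/(S y)^3 + 3*a^2*y^2/(S y)^5)) (at y)"
proof -
  have Q: "1 + a*y^2 > 0" using assms by (simp add: add_pos_nonneg)
  have Sp: "S y > 0" unfolding S_def using Q by simp
  have dQ: "((\<lambda>y. 1 + a*y^2) has_real_derivative 2*a*y) (at y)"
    by (auto intro!: derivative_eq_intros)
  have dS0: "(S has_real_derivative (inverse (sqrt (1 + a*y^2)) / 2 * (2*a*y))) (at y)"
    unfolding S_def using DERIV_chain2[OF DERIV_real_sqrt[OF Q] dQ] .
  have dS: "(S has_real_derivative a*y / S y) (at y)"
    using dS0 unfolding S_def by (simp add: field_simps)
  have "((\<lambda>y. 1 / S y) has_real_derivative (0 * S y - 1 * (a*y / S y)) / (S y * S y)) (at y)"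
    by (rule DERIV_divide[OF DERIV_const dS]) (use Sp in simp)
  thus "((\<lambda>y. 1 / S y) has_real_derivative (- a*y/(S y)^3)) (at y)"
    using Sp by (simp add: field_simps power3_eq_cube)
  have dm: "((\<lambda>y. - a*y) has_real_derivative -a) (at y)"
    by (auto intro!: derivative_eq_intros)
  have "((\<lambda>y. - a*y/(S y)^3) has_real_derivative
      ((-a) * (S y)^3 - (- a*y) * (of_nat 3 * ((a*y / S y) * (S y)^(3 - Suc 0)))) / ((S y)^3 * (S y)^3)) (at y)"
    by (rule DERIV_divide[OF dm DERIV_power[OF dS]]) (use Sp in simp)
  thus "((\<lambda>y. - a*y/(S y)^3) has_real_derivative (- a/(S y)^3 + 3*a^2*y^2/(S y)^5)) (at y)"
  proof (rule DERIV_cong)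
    have "S y ^ 5 = S y ^ 3 * S y ^ 2" by (simp flip: power_add)
    thus "((-a) * (S y)^3 - (- a*y) * (of_nat 3 * ((a*y / S y) * (S y)^(3 - Suc 0)))) / ((S y)^3 * (S y)^3)
       = - a/(S y)^3 + 3*a^2*y^2/(S y)^5"
      using Sp by (simp add: field_simps power2_eq_square power3_eq_cube)
  qed
qed

lemma sq_res:
  fixes a y D :: real assumes "a \<ge> 0"
  defines "S \<equiv> sqrt (1 + a*y^2)"
  shows "y^2*(1-y^2)*(- a/S^3 + 3*a^2*y^2/S^5) + ((D-3)*y - 2*y^3)*(- a*y/S^3)
     + (D-2)*(1/S)*(1-(1/S)^2) \<ge> 0"
proof -
  have Q: "1 + a*y^2 > 0" using assms by (simp add: add_pos_nonneg)
  have Sp: "S > 0" unfolding S_def using Q by simp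
  have S2: "S^2 = 1 + a*y^2" unfolding S_def using Q by simp
  have S5: "S^5 = S^3 * S^2" "S^3 = S * S^2" by (simp flip: power_add, simp add: power2_eq_square power3_eq_cube)
  define R where "R = y^2*(1-y^2)*(- a/S^3 + 3*a^2*y^2/S^5) + ((D-3)*y - 2*y^3)*(- a*y/S^3)
     + (D-2)*(1/S)*(1-(1/S)^2)"
  have "R * S^5 = y^2*(1-y^2)*(- a*S^2 + 3*a^2*y^2) + ((D-3)*y - 2*y^3)*(- a*y*S^2)
     + (D-2)*S^2*(S^2-1)"
    unfolding R_def S5 using Sp by (simp add: field_simps power2_eq_square)
  also have "\<dots> = a*y^2*(3*a*y^2 + 3*y^2)" unfolding S2 by (simp add: algebra_simps power2_eq_square power3_eq_cube)
  also have "\<dots> \<ge> 0" using assms by simp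
  finally have "R * S^5 \<ge> 0" .
  hence "R \<ge> 0" using Sp by (simp add: zero_le_mult_iff)
  thus ?thesis unfolding R_def .
qed

lemma inv_sqrt_ge:
  fixes x :: real assumes "x \<ge> 0"
  shows "1 / sqrt (1 + x) \<ge> 1 - x/2"
proof (cases "x \<ge> 2")
  case True
  have "1 / sqrt (1 + x) > 0" using assms by simp
  thus ?thesis using True by linarith
next
  case False
  have h: "1 - x/2 \<ge> 0" using False by simp
  have "(1 - x/2)^2 * (1 + x) \<le> 1"
  proof -
    have "(1 - x/2)^2 * (1 + x) = 1 - 3/4*x^2 + x^3/4" by (simp add: algebra_simps power2_eq_square power3_eq_cube)
    also have "x^3/4 \<le> 3/4*x^2"
    proof -
      have "x * (x*x) \<le> 3 * (x*x)" using assms False by (intro mult_right_mono) auto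
      thus ?thesis by (simp add: power2_eq_square power3_eq_cube)
    qed
    ultimately show ?thesis by linarith
  qed
  hence "sqrt ((1 - x/2)^2 * (1 + x)) \<le> 1" by simp
  hence "(1 - x/2) * sqrt (1 + x) \<le> 1" using h by (simp add: real_sqrt_mult)
  moreover have "sqrt (1 + x) > 0" using assms by simp
  ultimately show ?thesis by (simp add: field_simps)
qed




theorem lemma2:
  fixes d :: nat
    and u u1 u2 :: "real \<Rightarrow> real \<Rightarrow> real"
    and c :: "real \<Rightarrow> real"
  assumes "d \<ge> 10"
    and "\<And>a. a \<ge> 0 \<Longrightarrow> profile_solution d a (u a) (u1 a) (u2 a)"
    and "\<And>a. a \<ge> 0 \<Longrightarrow> (u a \<longlongrightarrow> c a) (at_left 1)"
  shows "(\<forall>a b. 0 \<le> a \<and> a \<le> b \<longrightarrow> c b \<le> c a) \<and> c 0 = 1 \<and> (c \<longlongrightarrow> 0) at_top"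
proof -
  note PS = assms(2)
  have d10: "real d \<ge> 10" using assms(1) by simp
  have res0: "\<And>y. 0<y \<Longrightarrow> y<1 \<Longrightarrow> y^2 * (1 - y^2) * u2 a y + ((real d - 3) * y - 2 * y^3) * u1 a y
          + (real d - 2) * u a y * (1 - (u a y)^2) = 0" if "a \<ge> 0" for a
    using ps_facts(3)[OF PS[OF that]] by blast
  note dA = ps_facts(1)[OF PS] and dA1 = ps_facts(2)[OF PS]
  have lim1: "(u a \<longlongrightarrow> 1) (at_right 0)" if "a \<ge> 0" for a using ps_lim[OF PS[OF that]] .

  have ord: "u b y < u a y" if ab: "0 \<le> a" "a < b" and y: "0<y" "y<1" for a b y
  proof -
    have b0: "b \<ge> 0" using ab by simp
    obtain Ca \<delta>a where A: "Ca \<ge> 0" "\<delta>a > 0" "\<And>y. 0<y \<Longrightarrow> y<\<delta>a \<Longrightarrow> \<bar>u a y - (1 - a*y^2)\<bar> \<le> Ca*y^4"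
      using ps_bound[OF PS[OF ab(1)]] by blast
    obtain Cb \<delta>b where B: "Cb \<ge> 0" "\<delta>b > 0" "\<And>y. 0<y \<Longrightarrow> y<\<delta>b \<Longrightarrow> \<bar>u b y - (1 - b*y^2)\<bar> \<le> Cb*y^4"
      using ps_bound[OF PS[OF b0]] by blast
    obtain \<delta> where \<delta>: "\<delta> > 0" "\<And>y. 0<y \<Longrightarrow> y<\<delta> \<Longrightarrow> u a y - u b y > 0"
    proof (rule pos_near0[of "b-a" "Ca+Cb" "min \<delta>a \<delta>b" "\<lambda>y. u a y - u b y"])
      show "b - a > 0" "Ca + Cb \<ge> 0" "min \<delta>a \<delta>b > 0" using ab A B by auto
      fix y assume "0<y" "y < min \<delta>a \<delta>b"
      hence "\<bar>u a y - (1 - a*y^2)\<bar> \<le> Ca*y^4" "\<bar>u b y - (1 - b*y^2)\<bar> \<le> Cb*y^4"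
        using A B by auto
      thus "u a y - u b y \<ge> (b-a)*y^2 - (Ca+Cb)*y^4" by (simp add: algebra_simps abs_le_iff)
    qed auto
    show ?thesis
    proof (rule cmp[OF assms(1) dA[OF ab(1)] dA1[OF ab(1)] dA[OF b0] dA1[OF b0] _ \<delta>(1) _ _ y])
      show "((\<lambda>y. y^3*(u a y - u b y)) \<longlongrightarrow> 0) (at_right 0)"
        by (rule lim3[OF lim1[OF ab(1)] lim1[OF b0]])
    qed (use res0[OF ab(1)] res0[OF b0] \<delta>(2) in auto)
  qed

  have mono: "\<forall>a b. 0 \<le> a \<and> a \<le> b \<longrightarrow> c b \<le> c a"
  proof (intro allI impI)
    fix a b :: real assume ab: "0 \<le> a \<and> a \<le> b"
    show "c b \<le> c a"
    proof (cases "a = b")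
      case False
      hence "a < b" using ab by simp
      thus ?thesis using lim_le[OF assms(3)[of b] assms(3)[of a]] ord ab
        by (smt (verit))
    qed simp
  qed

  have zero0: "(0::real) \<ge> 0" by simp
  obtain C0 \<delta>0 where Z: "C0 \<ge> 0" "\<delta>0 > 0" "\<And>y. 0<y \<Longrightarrow> y<\<delta>0 \<Longrightarrow> \<bar>u 0 y - (1 - 0*y^2)\<bar> \<le> C0*y^4"
    using ps_bound[OF PS[OF zero0]] by blast
  have c0b: "\<bar>c 0 - 1\<bar> \<le> 5*\<epsilon>" if e: "0 < \<epsilon>" "\<epsilon> \<le> 1" "(real d - 2)*\<epsilon> \<le> 1/100" for \<epsilon>
  proof -
    have up: "u 0 y < 1 + \<epsilon>*(y^2 + 4*y^4)" if y: "0<y" "y<1" for y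
    proof -
      obtain \<delta> where \<delta>: "\<delta> > 0" "\<And>y. 0<y \<Longrightarrow> y<\<delta> \<Longrightarrow> (1 + \<epsilon>*(y^2 + 4*y^4)) - u 0 y > 0"
      proof (rule pos_near0[of "\<epsilon>" "C0" "\<delta>0" "\<lambda>y. (1 + \<epsilon>*(y^2 + 4*y^4)) - u 0 y"])
        fix y assume "0<y" "y < \<delta>0"
        hence "\<bar>u 0 y - (1 - 0*y^2)\<bar> \<le> C0*y^4" using Z by auto
        moreover have "\<epsilon>*(4*y^4) \<ge> 0" using e by simp
        ultimately show "(1 + \<epsilon>*(y^2 + 4*y^4)) - u 0 y \<ge> \<epsilon>*y^2 - C0*y^4"
          by (simp add: algebra_simps abs_le_iff)
      qed (use e Z in auto)
      show ?thesis
      proof (rule cmp[where U = "\<lambda>y. 1 + \<epsilon>*(y^2 + 4*y^4)" and V = "u 0" and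
            Ud = "\<lambda>y. \<epsilon>*(2*y + 16*y^3)" and Udd = "\<lambda>y. \<epsilon>*(2 + 48*y^2)",
            OF assms(1) _ _ dA[OF zero0] dA1[OF zero0] _ \<delta>(1) _ _ y])
        show "((\<lambda>y. 1 + \<epsilon>*(y^2 + 4*y^4)) has_real_derivative \<epsilon>*(2*y + 16*y^3)) (at y)" for y
          by (auto intro!: derivative_eq_intros simp: algebra_simps)
        show "((\<lambda>y. \<epsilon>*(2*y + 16*y^3)) has_real_derivative \<epsilon>*(2 + 48*y^2)) (at y)" for y
          by (auto intro!: derivative_eq_intros simp: algebra_simps)
        have "((\<lambda>y. 1 + \<epsilon>*(y^2 + 4*y^4)) \<longlongrightarrow> 1 + \<epsilon>*(0^2 + 4*0^4)) (at_right 0)"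
          by (intro tendsto_intros tendsto_ident_at)
        hence "((\<lambda>y. 1 + \<epsilon>*(y^2 + 4*y^4)) \<longlongrightarrow> 1) (at_right 0)" by simp
        thus "((\<lambda>y. y^3*((1 + \<epsilon>*(y^2 + 4*y^4)) - u 0 y)) \<longlongrightarrow> 0) (at_right 0)"
          by (rule lim3[OF _ lim1[OF zero0]])
        fix y :: real assume y: "0<y" "y<1"
        have "(real d - 2) * u 0 y * (1 - (u 0 y)^2) + ((real d - 3) * y - 2 * y^3) * u1 0 y + y^2 * (1 - y^2) * u2 0 y = 0"
          using res0[OF zero0 y] by simp
        moreover have "0 \<le> y^2*(1-y^2)*(\<epsilon>*(2+48*y^2)) + ((real d-3)*y - 2*y^3)*(\<epsilon>*(2*y+16*y^3))
           + (real d-2)*(1+\<epsilon>*(y^2 + 4*y^4))*(1-(1+\<epsilon>*(y^2 + 4*y^4))^2)"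
          unfolding poly_res using up_res[OF d10 y e] .
        ultimately show "y^2*(1-y^2)*u2 0 y + ((real d-3)*y - 2*y^3)*u1 0 y + (real d-2)*u 0 y*(1-(u 0 y)^2)
          \<le> y^2*(1-y^2)*(\<epsilon>*(2+48*y^2)) + ((real d-3)*y - 2*y^3)*(\<epsilon>*(2*y+16*y^3))
           + (real d-2)*(1+\<epsilon>*(y^2 + 4*y^4))*(1-(1+\<epsilon>*(y^2 + 4*y^4))^2)" by linarith
      qed (use \<delta>(2) in auto)
    qed
    have lo: "1 + (-\<epsilon>)*(y^2 + 4*y^4) < u 0 y" if y: "0<y" "y<1" for y
    proof -
      obtain \<delta> where \<delta>: "\<delta> > 0" "\<And>y. 0<y \<Longrightarrow> y<\<delta> \<Longrightarrow> u 0 y - (1 + (-\<epsilon>)*(y^2 + 4*y^4)) > 0"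
      proof (rule pos_near0[of "\<epsilon>" "C0" "\<delta>0" "\<lambda>y. u 0 y - (1 + (-\<epsilon>)*(y^2 + 4*y^4))"])
        fix y assume "0<y" "y < \<delta>0"
        hence "\<bar>u 0 y - (1 - 0*y^2)\<bar> \<le> C0*y^4" using Z by auto
        moreover have "\<epsilon>*(4*y^4) \<ge> 0" using e by simp
        ultimately show "u 0 y - (1 + (-\<epsilon>)*(y^2 + 4*y^4)) \<ge> \<epsilon>*y^2 - C0*y^4"
          by (simp add: algebra_simps abs_le_iff)
      qed (use e Z in auto)
      show ?thesis
      proof (rule cmp[where V = "\<lambda>y. 1 + (-\<epsilon>)*(y^2 + 4*y^4)" and U = "u 0" and
            Vd = "\<lambda>y. (-\<epsilon>)*(2*y + 16*y^3)" and Vdd = "\<lambda>y. (-\<epsilon>)*(2 + 48*y^2)",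
            OF assms(1) dA[OF zero0] dA1[OF zero0] _ _ _ \<delta>(1) _ _ y])
        show "((\<lambda>y. 1 + (-\<epsilon>)*(y^2 + 4*y^4)) has_real_derivative (-\<epsilon>)*(2*y + 16*y^3)) (at y)" for y
          by (auto intro!: derivative_eq_intros simp: algebra_simps)
        show "((\<lambda>y. (-\<epsilon>)*(2*y + 16*y^3)) has_real_derivative (-\<epsilon>)*(2 + 48*y^2)) (at y)" for y
          by (auto intro!: derivative_eq_intros simp: algebra_simps)
        have "((\<lambda>y. 1 + (-\<epsilon>)*(y^2 + 4*y^4)) \<longlongrightarrow> 1 + (-\<epsilon>)*(0^2 + 4*0^4)) (at_right 0)"
          by (intro tendsto_intros tendsto_ident_at)
        hence "((\<lambda>y. 1 + (-\<epsilon>)*(y^2 + 4*y^4)) \<longlongrightarrow> 1) (at_right 0)" by simp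
        thus "((\<lambda>y. y^3*(u 0 y - (1 + (-\<epsilon>)*(y^2 + 4*y^4)))) \<longlongrightarrow> 0) (at_right 0)"
          by (rule lim3[OF lim1[OF zero0]])
        fix y :: real assume y: "0<y" "y<1"
        have "(real d - 2) * u 0 y * (1 - (u 0 y)^2) + ((real d - 3) * y - 2 * y^3) * u1 0 y + y^2 * (1 - y^2) * u2 0 y = 0"
          using res0[OF zero0 y] by simp
        moreover have "y^2*(1-y^2)*((-\<epsilon>)*(2+48*y^2)) + ((real d-3)*y - 2*y^3)*((-\<epsilon>)*(2*y+16*y^3))
           + (real d-2)*(1+(-\<epsilon>)*(y^2 + 4*y^4))*(1-(1+(-\<epsilon>)*(y^2 + 4*y^4))^2) \<le> 0"
          unfolding poly_res using low_res[OF d10 y e] .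
        ultimately show "y^2*(1-y^2)*((-\<epsilon>)*(2+48*y^2)) + ((real d-3)*y - 2*y^3)*((-\<epsilon>)*(2*y+16*y^3))
           + (real d-2)*(1+(-\<epsilon>)*(y^2 + 4*y^4))*(1-(1+(-\<epsilon>)*(y^2 + 4*y^4))^2)
          \<le> y^2*(1-y^2)*u2 0 y + ((real d-3)*y - 2*y^3)*u1 0 y + (real d-2)*u 0 y*(1-(u 0 y)^2)" by linarith
      qed (use \<delta>(2) in auto)
    qed
    have l1: "((\<lambda>y. 1 + \<epsilon>*(y^2 + 4*y^4)) \<longlongrightarrow> 1 + \<epsilon>*(1^2 + 4*1^4)) (at_left 1)"
      by (intro tendsto_intros tendsto_ident_at)
    have l2: "((\<lambda>y. 1 + (-\<epsilon>)*(y^2 + 4*y^4)) \<longlongrightarrow> 1 + (-\<epsilon>)*(1^2 + 4*1^4)) (at_left 1)"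
      by (intro tendsto_intros tendsto_ident_at)
    have "c 0 \<le> 1 + \<epsilon>*(1^2 + 4*1^4)"
      by (rule lim_le[OF assms(3)[OF zero0] l1]) (use up in \<open>auto intro: less_imp_le\<close>)
    moreover have "1 + (-\<epsilon>)*(1^2 + 4*1^4) \<le> c 0"
      by (rule lim_le[OF l2 assms(3)[OF zero0]]) (use lo in \<open>auto intro: less_imp_le\<close>)
    ultimately show ?thesis by (simp add: abs_le_iff)
  qed
  have c0: "c 0 = 1"
  proof (rule ccontr)
    assume ne: "c 0 \<noteq> 1"
    define \<epsilon> where "\<epsilon> = min (1/(100*real d)) (\<bar>c 0 - 1\<bar>/10)"
    have dpos: "real d > 0" using d10 by simp
    have e1: "0 < \<epsilon>" using ne dpos by (simp add: \<epsilon>_def)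
    have e2: "\<epsilon> \<le> 1" using d10 unfolding \<epsilon>_def by (simp add: min_le_iff_disj)
    have "(real d - 2)*\<epsilon> \<le> real d * (1/(100*real d))"
      using e1 d10 by (intro mult_mono) (auto simp: \<epsilon>_def)
    hence e3: "(real d - 2)*\<epsilon> \<le> 1/100" using dpos by simp
    have "\<bar>c 0 - 1\<bar> \<le> 5*\<epsilon>" using c0b[OF e1 e2 e3] .
    moreover have "\<epsilon> \<le> \<bar>c 0 - 1\<bar>/10" unfolding \<epsilon>_def by (rule min.cobounded2)
    ultimately show False using ne by simp
  qed

  have cb: "0 \<le> c a \<and> c a \<le> 1 / sqrt (1 + a)" if a: "a > 0" for a
  proof -
    have a0: "a \<ge> 0" using a by simp
    obtain C \<delta>1 where A: "C \<ge> 0" "\<delta>1 > 0" "\<And>y. 0<y \<Longrightarrow> y<\<delta>1 \<Longrightarrow> \<bar>u a y - (1 - a*y^2)\<bar> \<le> C*y^4"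
      using ps_bound[OF PS[OF a0]] by blast
    have pos: "0 < u a y" if y: "0<y" "y<1" for y
    proof -
      have "\<forall>\<^sub>F y in at_right 0. u a y > 0" using order_tendstoD(1)[OF lim1[OF a0], of 0] by simp
      then obtain \<delta> where \<delta>: "\<delta> > 0" "\<And>y. 0<y \<Longrightarrow> y<\<delta> \<Longrightarrow> 0 < u a y - 0"
        unfolding eventually_at_right_field by auto
      show ?thesis
      proof (rule cmp[where V = "\<lambda>y. 0" and U = "u a" and
            Vd = "\<lambda>y. 0" and Vdd = "\<lambda>y. 0",
            OF assms(1) dA[OF a0] dA1[OF a0] _ _ _ \<delta>(1) _ _ y])
        show "((\<lambda>y. y^3*(u a y - 0)) \<longlongrightarrow> 0) (at_right 0)"
          by (rule lim3[OF lim1[OF a0] tendsto_const])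
      qed (use res0[OF a0] \<delta>(2) in auto)
    qed
    define S where "S = (\<lambda>y::real. sqrt (1 + a*y^2))"
    have up: "u a y < 1 / S y" if y: "0<y" "y<1" for y
    proof -
      obtain \<delta> where \<delta>: "\<delta> > 0" "\<And>y. 0<y \<Longrightarrow> y<\<delta> \<Longrightarrow> 1 / S y - u a y > 0"
      proof (rule pos_near0[of "a/2" "C" "\<delta>1" "\<lambda>y. 1 / S y - u a y"])
        fix y assume "0<y" "y < \<delta>1"
        hence "\<bar>u a y - (1 - a*y^2)\<bar> \<le> C*y^4" using A by auto
        moreover have "1 / S y \<ge> 1 - a*y^2/2" unfolding S_def using inv_sqrt_ge[of "a*y^2"] a0 by simp
        ultimately show "1 / S y - u a y \<ge> a/2*y^2 - C*y^4"
          by (simp add: algebra_simps abs_le_iff)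
      qed (use a A in auto)
      show ?thesis
      proof (rule cmp[where U = "\<lambda>y. 1 / S y" and V = "u a" and
            Ud = "\<lambda>y. - a*y/(S y)^3" and Udd = "\<lambda>y. - a/(S y)^3 + 3*a^2*y^2/(S y)^5",
            OF assms(1) _ _ dA[OF a0] dA1[OF a0] _ \<delta>(1) _ _ y])
        show "((\<lambda>y. 1 / S y) has_real_derivative - a*y/(S y)^3) (at y)" for y
          unfolding S_def by (rule sq_derivs(1)[OF a0])
        show "((\<lambda>y. - a*y/(S y)^3) has_real_derivative - a/(S y)^3 + 3*a^2*y^2/(S y)^5) (at y)" for y
          unfolding S_def by (rule sq_derivs(2)[OF a0])
        have "((\<lambda>y. 1 / sqrt (1 + a*y^2)) \<longlongrightarrow> 1 / sqrt (1 + a*0^2)) (at_right 0)"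
          by (intro tendsto_intros tendsto_ident_at) simp
        hence "((\<lambda>y. 1 / S y) \<longlongrightarrow> 1) (at_right 0)" unfolding S_def by simp
        thus "((\<lambda>y. y^3*(1 / S y - u a y)) \<longlongrightarrow> 0) (at_right 0)"
          by (rule lim3[OF _ lim1[OF a0]])
        fix y :: real assume y: "0<y" "y<1"
        show "y^2*(1-y^2)*u2 a y + ((real d-3)*y - 2*y^3)*u1 a y + (real d-2)*u a y*(1-(u a y)^2)
          \<le> y^2*(1-y^2)*(- a/(S y)^3 + 3*a^2*y^2/(S y)^5) + ((real d-3)*y - 2*y^3)*(- a*y/(S y)^3)
           + (real d-2)*(1 / S y)*(1-(1 / S y)^2)"
          using res0[OF a0 y] sq_res[OF a0, of y "real d"] unfolding S_def by simp
      qed (use \<delta>(2) in auto)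
    qed
    have l1: "((\<lambda>y. 1 / sqrt (1 + a*y^2)) \<longlongrightarrow> 1 / sqrt (1 + a*1^2)) (at_left 1)"
      by (intro tendsto_intros tendsto_ident_at) (use a0 in \<open>simp add: add_pos_nonneg\<close>)
    have "c a \<le> 1 / sqrt (1 + a*1^2)"
      by (rule lim_le[OF assms(3)[OF a0] l1]) (use up in \<open>auto intro: less_imp_le simp: S_def\<close>)
    moreover have "0 \<le> c a"
      by (rule lim_le[OF tendsto_const assms(3)[OF a0]]) (use pos in \<open>auto intro: less_imp_le\<close>)
    ultimately show ?thesis by simp
  qed
  have lim: "(c \<longlongrightarrow> 0) at_top"
  proof (rule tendsto_sandwich[of "\<lambda>_. 0" c at_top "\<lambda>a. 1 / sqrt (1 + a)"])
    show "\<forall>\<^sub>F n in at_top. 0 \<le> c n" using eventually_gt_at_top[of 0] by eventually_elim (use cb in auto)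
    show "\<forall>\<^sub>F n in at_top. c n \<le> 1 / sqrt (1 + n)" using eventually_gt_at_top[of 0] by eventually_elim (use cb in auto)
    have "filterlim (\<lambda>a::real. sqrt (1 + a)) at_top at_top"
      by (rule filterlim_compose[OF sqrt_at_top filterlim_tendsto_add_at_top[OF tendsto_const filterlim_ident]])
    hence "((\<lambda>a::real. inverse (sqrt (1 + a))) \<longlongrightarrow> 0) at_top" by (rule tendsto_inverse_0_at_top)
    thus "((\<lambda>a::real. 1 / sqrt (1 + a)) \<longlongrightarrow> 0) at_top" by (simp add: inverse_eq_divide)
  qed simp
  show ?thesis using mono c0 lim by blast
qed

end
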